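(* Let $\mathcal{L}$ be differentiable and let (A4)–(A5) (see context) hold with some $q>1$. Fix $\theta\in\mathbb{R}^d$ and $p\in(0,1)$, let $\widetilde G(\theta)\sim\mathcal{D}_{\mathcal I}(\theta)$ be an uncorrupted gradient sample, $\tau_\theta=Q_p(\|\widetilde G(\theta)\|)$, $\alpha_\theta=\min(1,\tau_\theta/\|\widetilde G(\theta)\|)$ and $\overline\alpha_\theta=\mathbb{E}[\alpha_\theta\mid\theta]$. Then $$\big\|\mathbb{E}[\alpha_\theta\widetilde G(\theta)]-\overline\alpha_\theta\nabla\mathcal{L}(\theta)\big\|\le(1-p)^{1-1/q}\big(A_q\|\theta-\theta^\star\|+B_q\big),$$ $$\tau_\theta\le\|\nabla\mathcal{L}(\theta)\|+Q_p(\|\varepsilon_\theta\|)\le\|\nabla\mathcal{L}(\theta)\|+(1-p)^{-1/q}\big(A_q\|\theta-\theta^\star\|+B_q\big).$$ If moreover $q\ge2$, then $$\mathbb{E}\big\|\alpha_\theta\widetilde G(\theta)-\mathbb{E}[\alpha_\theta\widetilde G(\theta)]\big\|^2\le\big(A_q\|\theta-\theta^\star\|+B_q\big)^2+5(1-p)\tau_\theta^2.$$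
   Context: (A4) For all $\theta$, uncorrupted gradient samples satisfy $\widetilde G(\theta)=\nabla\mathcal{L}(\theta)+\varepsilon_\theta$, with $\mathbb{E}[\varepsilon_\theta\mid\theta]=0$ and $\varepsilon_\theta$ distributed as $\delta\nu_{\theta,1}+(1-\delta)\nu_{\theta,2}$, $\delta>0$, where $\nu_{\theta,1}$ has a Lebesgue density $h_\theta$ with $\inf_{\|\omega\|\le R}h_\theta(\omega)>\varkappa(R)>0$ for all $R>0$, $\varkappa$ independent of $\theta$. (A5) For all $\theta$: $\mathbb{E}[\|\varepsilon_\theta\|^q\mid\theta]^{1/q}\le A_q\|\theta-\theta^\star\|+B_q$ with $A_q,B_q>0$, where $\theta^\star\in\mathbb{R}^d$ is a fixed reference point (the minimizer of $\mathcal{L}$). $Q_p(X)$ denotes the $p$-quantile of a real random variable $X$. All expectations are conditional on the fixed $\theta$. *)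

theory Defs
  imports "HOL-Probability.Probability"
begin

definition quantile :: "'a measure \<Rightarrow> ('a \<Rightarrow> real) \<Rightarrow> real \<Rightarrow> real" where
  "quantile M X p = Inf {t::real. measure M {\<omega> \<in> space M. X \<omega> \<le> t} \<ge> p}"

text \<open>Clipping factor alpha = min(1, tau / norm g), with the convention min(1, tau/0) = 1.\<close>
definition clip_factor :: "real \<Rightarrow> 'v::real_normed_vector \<Rightarrow> real" where
  "clip_factor \<tau> g = (if norm g \<le> \<tau> then 1 else \<tau> / norm g)"

end

theory Submission
  imports Defs
begin

lemma clip_proj:
  fixes x :: "'a::euclidean_space" and \<tau> :: real
  assumes "0 \<le> \<tau>"
  shows "clip_factor \<tau> x *\<^sub>R x = closest_point (cball 0 \<tau>) x"
proof (rule closest_point_unique)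
  show "convex (cball (0::'a) \<tau>)" by simp
  show "closed (cball (0::'a) \<tau>)" by simp
  show "clip_factor \<tau> x *\<^sub>R x \<in> cball 0 \<tau>"
    using assms by (auto simp: clip_factor_def)
  show "\<forall>z\<in>cball 0 \<tau>. dist x (clip_factor \<tau> x *\<^sub>R x) \<le> dist x z"
  proof
    fix z :: 'a assume z: "z \<in> cball 0 \<tau>"
    show "dist x (clip_factor \<tau> x *\<^sub>R x) \<le> dist x z"
    proof (cases "norm x \<le> \<tau>")
      case True then show ?thesis by (simp add: clip_factor_def)
    next
      case False
      then have nx: "norm x > 0" using assms by auto
      have "x - (\<tau> / norm x) *\<^sub>R x = (1 - \<tau> / norm x) *\<^sub>R x" by (simp add: algebra_simps)
      then have "dist x (clip_factor \<tau> x *\<^sub>R x) = \<bar>1 - \<tau> / norm x\<bar> * norm x"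
        using False by (simp add: clip_factor_def dist_norm)
      also have "\<dots> = norm x - \<tau>" using False nx by (simp add: field_simps abs_if)
      also have "\<dots> \<le> norm x - norm z" using z by simp
      also have "\<dots> \<le> dist x z" by (simp add: dist_norm norm_triangle_ineq2)
      finally show ?thesis .
    qed
  qed
qed

lemma clip_lip:
  fixes x y :: "'a::euclidean_space" and \<tau> :: real
  assumes "0 \<le> \<tau>"
  shows "norm (clip_factor \<tau> x *\<^sub>R x - clip_factor \<tau> y *\<^sub>R y) \<le> norm (x - y)"
  using closest_point_lipschitz[of "cball (0::'a) \<tau>" x y] assms
  by (simp add: clip_proj dist_norm)

lemma clip_norm:
  fixes x :: "'a::real_normed_vector" and \<tau> :: real
  assumes "0 \<le> \<tau>"
  shows "norm (clip_factor \<tau> x *\<^sub>R x) \<le> \<tau>"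
  using assms by (auto simp: clip_factor_def)

lemma clip_range: "0 \<le> \<tau> \<Longrightarrow> 0 \<le> clip_factor \<tau> x \<and> clip_factor \<tau> x \<le> 1"
  by (auto simp: clip_factor_def divide_le_eq)

lemma clip_cont:
  fixes \<tau> :: real
  assumes "0 \<le> \<tau>"
  shows "continuous_on UNIV (\<lambda>x::'a::euclidean_space. clip_factor \<tau> x *\<^sub>R x)"
  using continuous_on_closest_point[of "cball (0::'a) \<tau>" UNIV] assms
  by (simp add: clip_proj)


lemma norm_add_sq:
  fixes a b :: "'a::real_inner"
  shows "(norm (a + b))\<^sup>2 = (norm a)\<^sup>2 + 2 * (a \<bullet> b) + (norm b)\<^sup>2"
  by (simp add: power2_norm_eq_inner inner_add_left inner_add_right inner_commute)

lemma young1: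
  fixes Yv C r q :: real
  assumes "0 \<le> Yv" "0 < C" "0 < r" "1 < q"
  shows "Yv \<le> C * r powr (1 - 1/q) * (Yv powr q / (q * C powr q) + (1 - 1/q) / r)"
proof -
  define a where "a = 1 - 1/q"
  have q': "q/(q-1) > 1" using assms by (simp add: field_simps)
  have qq: "1/q + 1/(q/(q-1)) = 1" using assms by (simp add: field_simps)
  have y: "(Yv/C) * r powr (-a) \<le> (Yv/C) powr q / q + (r powr (-a)) powr (q/(q-1)) / (q/(q-1))"
    by (rule Youngs_inequality[OF assms(4) q' qq]) (use assms in auto)
  have e1: "(r powr (-a)) powr (q/(q-1)) = 1 / r"
  proof -
    have "(r powr (-a)) powr (q/(q-1)) = r powr (-a * (q/(q-1)))" by (simp add: powr_powr)
    also have "-a * (q/(q-1)) = -1" using assms by (simp add: a_def field_simps)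
    finally show ?thesis using assms by (simp add: powr_minus_divide)
  qed
  have e2: "1 / (q/(q-1)) = a" using assms by (simp add: a_def field_simps)
  have e3: "(Yv/C) powr q = Yv powr q / C powr q" using assms by (simp add: powr_divide)
  have "(Yv/C) * r powr (-a) \<le> Yv powr q / (q * C powr q) + a / r"
  proof -
    have e4: "(r powr (-a)) powr (q/(q-1)) / (q/(q-1)) = a / r"
      unfolding e1 by (subst e2[symmetric]) simp
    show ?thesis using y unfolding e4 e3 by (simp add: field_simps)
  qed
  then have "C * r powr a * ((Yv/C) * r powr (-a)) \<le> C * r powr a * (Yv powr q / (q * C powr q) + a / r)"
    using assms by (intro mult_left_mono) auto
  moreover have "C * r powr a * ((Yv/C) * r powr (-a)) = Yv"
    using assms by (simp add: powr_minus field_simps)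
  ultimately show ?thesis by (simp add: a_def)
qed

lemma young2:
  fixes Yv C q :: real
  assumes "0 \<le> Yv" "0 < C" "2 \<le> q"
  shows "Yv^2 \<le> C^2 * ((2/q) * (Yv powr q / C powr q) + (1 - 2/q))"
proof (cases "Yv = 0")
  case True then show ?thesis using assms by (simp add: field_simps)
next
  case False
  then have Yp: "Yv > 0" using assms by simp
  have y: "(Yv powr q / C powr q) powr (2/q) * 1 powr (1 - 2/q) \<le> (2/q) * (Yv powr q / C powr q) + (1 - 2/q) * 1"
    by (rule Youngs_inequality_0) (use assms Yp in auto)
  have "(Yv powr q / C powr q) powr (2/q) = (Yv/C) powr 2"
    using assms Yp by (simp add: powr_divide[symmetric] powr_powr)
  also have "\<dots> = Yv^2 / C^2" using assms Yp by (simp add: powr_divide power_divide)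
  finally have "Yv^2 / C^2 \<le> (2/q) * (Yv powr q / C powr q) + (1 - 2/q)" using y by simp
  then show ?thesis using assms by (simp add: field_simps)
qed


theorem lemma2:
  fixes M :: "'w measure"
    and L :: "real^'d \<Rightarrow> real" and gradL :: "real^'d \<Rightarrow> real^'d"
    and \<epsilon> :: "real^'d \<Rightarrow> 'w \<Rightarrow> real^'d"
    and \<theta> \<theta>star :: "real^'d"
    and \<delta> q Aq Bq p :: real
  assumes M: "prob_space M"
    and L_diff: "\<And>x. GDERIV L x :> gradL x"
    and minimizer: "\<And>x. L \<theta>star \<le> L x"
    (* (A4) *)
    and eps_meas: "\<And>t. \<epsilon> t \<in> borel_measurable M"
    and eps_mean: "\<And>t. integrable M (\<epsilon> t) \<and> integral\<^sup>L M (\<epsilon> t) = 0"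
    and \<delta>: "0 < \<delta>" "\<delta> \<le> 1"
    and A4_mix: "\<exists>h \<nu>2 \<kappa>.
          (\<forall>R>0. \<kappa> R > (0::real)) \<and>
          (\<forall>t. (\<forall>\<omega>. 0 \<le> h t \<omega>) \<and> h t \<in> borel_measurable lborel
             \<and> prob_space (density lborel (\<lambda>\<omega>. ennreal (h t \<omega>)))
             \<and> (\<forall>R>0. \<kappa> R < (INF \<omega>\<in>cball 0 R. h t \<omega>))
             \<and> prob_space (\<nu>2 t) \<and> sets (\<nu>2 t) = sets borel
             \<and> (\<forall>A \<in> sets borel.
                  measure M {w \<in> space M. \<epsilon> t w \<in> A}
                  = \<delta> * measure (density lborel (\<lambda>\<omega>. ennreal (h t \<omega>))) A
                    + (1 - \<delta>) * measure (\<nu>2 t) A))"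
    (* (A5) *)
    and q: "q > 1" and AB: "Aq > 0" "Bq > 0"
    and A5: "\<And>t. (\<integral>\<^sup>+ w. ennreal (norm (\<epsilon> t w) powr q) \<partial>M)
                   \<le> ennreal ((Aq * norm (t - \<theta>star) + Bq) powr q)"
    and p: "0 < p" "p < 1"
  defines "G \<equiv> (\<lambda>w. gradL \<theta> + \<epsilon> \<theta> w)"
    and "\<tau> \<equiv> quantile M (\<lambda>w. norm (gradL \<theta> + \<epsilon> \<theta> w)) p"
    and "\<alpha> \<equiv> (\<lambda>w. clip_factor (quantile M (\<lambda>w. norm (gradL \<theta> + \<epsilon> \<theta> w)) p) (gradL \<theta> + \<epsilon> \<theta> w))"
    and "C \<equiv> Aq * norm (\<theta> - \<theta>star) + Bq"
  shows "norm ((\<integral>w. \<alpha> w *\<^sub>R G w \<partial>M) - (integral\<^sup>L M \<alpha>) *\<^sub>R gradL \<theta>)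
             \<le> (1 - p) powr (1 - 1 / q) * C
         \<and> \<tau> \<le> norm (gradL \<theta>) + quantile M (\<lambda>w. norm (\<epsilon> \<theta> w)) p
         \<and> norm (gradL \<theta>) + quantile M (\<lambda>w. norm (\<epsilon> \<theta> w)) p
             \<le> norm (gradL \<theta>) + (1 - p) powr (- 1 / q) * C
         \<and> (q \<ge> 2 \<longrightarrow>
             (\<integral>w. (norm (\<alpha> w *\<^sub>R G w - (\<integral>v. \<alpha> v *\<^sub>R G v \<partial>M)))\<^sup>2 \<partial>M)
               \<le> C\<^sup>2 + 5 * (1 - p) * \<tau>\<^sup>2)"
  proof -
  interpret prob_space M by (rule M)
  define g where "g = gradL \<theta>"
  define e where "e = \<epsilon> \<theta>"
  define Y where "Y = (\<lambda>w. norm (e w))"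
  define X where "X = (\<lambda>w. norm (g + e w))"
  define SX where "SX = {t. measure M {w\<in>space M. X w \<le> t} \<ge> p}"
  define SY where "SY = {t. measure M {w\<in>space M. Y w \<le> t} \<ge> p}"
  have tau: "\<tau> = Inf SX" by (simp add: \<tau>_def quantile_def SX_def X_def g_def e_def)
  have QY: "quantile M (\<lambda>w. norm (\<epsilon> \<theta> w)) p = Inf SY"
    by (simp add: quantile_def SY_def Y_def e_def)
  have alpha: "\<alpha> = (\<lambda>w. clip_factor \<tau> (G w))" by (simp add: \<alpha>_def \<tau>_def G_def)
  have Gg: "G = (\<lambda>w. g + e w)" by (simp add: G_def g_def e_def)
  have e_meas[measurable]: "e \<in> borel_measurable M" using eps_meas by (simp add: e_def)
  have G_meas[measurable]: "G \<in> borel_measurable M" unfolding Gg by measurable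
  have X_meas[measurable]: "X \<in> borel_measurable M" unfolding X_def by measurable
  have Y_meas[measurable]: "Y \<in> borel_measurable M" unfolding Y_def by measurable
  have e_int: "integrable M e" and e0: "integral\<^sup>L M e = 0" using eps_mean[of \<theta>] by (auto simp: e_def)
  have Cpos: "C > 0" using AB by (simp add: C_def add_nonneg_pos)
  define u where "u = (\<lambda>w. Y w powr q)"
  have u_meas[measurable]: "u \<in> borel_measurable M" unfolding u_def by measurable
  have u_nn: "(\<integral>\<^sup>+w. ennreal (u w) \<partial>M) \<le> ennreal (C powr q)"
    using A5[of \<theta>] by (simp add: u_def Y_def e_def C_def)
  have u_int: "integrable M u"
  proof (rule integrableI_bounded)
    have "(\<integral>\<^sup>+w. ennreal (norm (u w)) \<partial>M) = (\<integral>\<^sup>+w. ennreal (u w) \<partial>M)"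
      by (simp add: u_def)
    also have "\<dots> < \<infinity>" using u_nn by (simp add: le_less_trans)
    finally show "(\<integral>\<^sup>+w. ennreal (norm (u w)) \<partial>M) < \<infinity>" .
  qed simp
  have u_le: "integral\<^sup>L M u \<le> C powr q"
  proof -
    have "(\<integral>\<^sup>+w. ennreal (u w) \<partial>M) = ennreal (integral\<^sup>L M u)"
      by (rule nn_integral_eq_integral[OF u_int]) (simp add: u_def)
    then show ?thesis using u_nn by simp
  qed
  have u_nonneg: "\<And>w. 0 \<le> u w" by (simp add: u_def)
  define t0 where "t0 = (1-p) powr (-1/q) * C"
  have t0pos: "t0 > 0" using p Cpos by (simp add: t0_def)
  have t0q: "t0 powr q = C powr q / (1-p)"
  proof -
    have "t0 powr q = ((1-p) powr (-1/q)) powr q * C powr q"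
      using p Cpos by (simp add: t0_def powr_mult)
    also have "((1-p) powr (-1/q)) powr q = (1-p) powr (-1)" using q by (simp add: powr_powr)
    finally show ?thesis using p by (simp add: powr_minus_divide)
  qed
  have sets_eq: "{w\<in>space M. u w \<ge> t0 powr q} = {w\<in>space M. Y w \<ge> t0}"
  proof -
    have "\<And>w. u w \<ge> t0 powr q \<longleftrightarrow> Y w \<ge> t0"
    proof -
      fix w
      have "0 \<le> Y w" by (simp add: Y_def)
      then show "u w \<ge> t0 powr q \<longleftrightarrow> Y w \<ge> t0"
        using t0pos q unfolding u_def
        by (meson less_imp_le not_le order.strict_trans1 powr_less_mono2 powr_mono2 zero_less_one)
    qed
    then show ?thesis by simp
  qed
  have mk: "measure M {w\<in>space M. Y w \<ge> t0} \<le> 1 - p"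
  proof -
    have "measure M {w\<in>space M. u w \<ge> t0 powr q} \<le> integral\<^sup>L M u / t0 powr q"
      by (rule integral_Markov_inequality_measure[OF u_int, of "space M"]) (use t0pos u_nonneg in auto)
    also have "\<dots> \<le> C powr q / t0 powr q"
      using u_le t0pos by (simp add: divide_right_mono)
    also have "\<dots> = 1 - p" using t0q Cpos p by simp
    finally show ?thesis using sets_eq by simp
  qed
  have t0S: "t0 \<in> SY"
  proof -
    have "space M - {w\<in>space M. Y w \<ge> t0} \<subseteq> {w\<in>space M. Y w \<le> t0}" by auto
    then have "measure M (space M - {w\<in>space M. Y w \<ge> t0}) \<le> measure M {w\<in>space M. Y w \<le> t0}"
      by (intro finite_measure_mono) measurable
    moreover have "measure M (space M - {w\<in>space M. Y w \<ge> t0}) = 1 - measure M {w\<in>space M. Y w \<ge> t0}"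
      by (rule prob_compl) measurable
    ultimately show ?thesis using mk by (simp add: SY_def)
  qed
  have SY_bdd: "bdd_below SY"
  proof (rule bdd_belowI)
    fix t assume t: "t \<in> SY"
    show "0 \<le> t"
    proof (rule ccontr)
      assume "\<not> 0 \<le> t"
      then have "{w\<in>space M. Y w \<le> t} = {}" unfolding Y_def by (smt (verit) Collect_empty_eq norm_ge_zero)
      then have "measure M {w\<in>space M. Y w \<le> t} = 0" by (simp only: measure_empty)
      then have "measure M {w\<in>space M. Y w \<le> t} = 0" by (simp only: measure_empty)
    then show False using t p by (simp add: SY_def)
    qed
  qed
  have SX_ge0: "\<And>t. t \<in> SX \<Longrightarrow> 0 \<le> t"
  proof (rule ccontr)
    fix t assume t: "t \<in> SX" "\<not> 0 \<le> t"
    then have "{w\<in>space M. X w \<le> t} = {}" unfolding X_def by (smt (verit) Collect_empty_eq norm_ge_zero)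
    then have "measure M {w\<in>space M. X w \<le> t} = 0" by (simp only: measure_empty)
    then show False using t p by (simp add: SX_def)
  qed
  have SX_bdd: "bdd_below SX" using SX_ge0 by (meson bdd_belowI)
  have claim3: "Inf SY \<le> t0" by (rule cInf_lower[OF t0S SY_bdd])
  have shift: "norm g + t \<in> SX" if t: "t \<in> SY" for t
  proof -
    have "{w\<in>space M. Y w \<le> t} \<subseteq> {w\<in>space M. X w \<le> norm g + t}"
      unfolding X_def Y_def by (auto intro: norm_triangle_le)
    then have "measure M {w\<in>space M. Y w \<le> t} \<le> measure M {w\<in>space M. X w \<le> norm g + t}"
      by (intro finite_measure_mono) measurable
    then show ?thesis using t by (simp add: SX_def SY_def)
  qed
  have SY_ne: "SY \<noteq> {}" using t0S by auto
  have SX_ne: "SX \<noteq> {}" using shift t0S by auto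
  have claim2: "\<tau> \<le> norm g + Inf SY"
  proof -
    have "\<tau> - norm g \<le> Inf SY"
    proof (rule cInf_greatest[OF SY_ne])
      fix t assume "t \<in> SY"
      then have "\<tau> \<le> norm g + t" unfolding tau by (intro cInf_lower[OF shift SX_bdd])
      then show "\<tau> - norm g \<le> t" by simp
    qed
    then show ?thesis by simp
  qed
  have tau0: "0 \<le> \<tau>" unfolding tau by (rule cInf_greatest[OF SX_ne SX_ge0])
  have SX_up: "t' \<in> SX" if "t \<in> SX" "t \<le> t'" for t t'
  proof -
    have "{w\<in>space M. X w \<le> t} \<subseteq> {w\<in>space M. X w \<le> t'}" using that by auto
    then have "measure M {w\<in>space M. X w \<le> t} \<le> measure M {w\<in>space M. X w \<le> t'}"
      by (intro finite_measure_mono) measurable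
    then show ?thesis using that by (simp add: SX_def)
  qed
  have tauS: "\<tau> + 1 / Suc n \<in> SX" for n :: nat
  proof -
    have "Inf SX < \<tau> + 1 / Suc n" using tau by simp
    then obtain t where "t \<in> SX" "t < \<tau> + 1 / Suc n" using cInf_lessD[OF SX_ne] by blast
    then show ?thesis using SX_up by (meson less_imp_le)
  qed
  define SS where "SS = {w\<in>space M. X w > \<tau>}"
  have SS_meas[measurable]: "SS \<in> sets M" unfolding SS_def by measurable
  define A where "A = (\<lambda>n::nat. {w\<in>space M. X w > \<tau> + 1 / Suc n})"
  have A_meas: "range A \<subseteq> sets M" unfolding A_def by auto
  have A_inc: "incseq A"
  proof (rule incseq_SucI)
    fix n :: nat
    have "1 / real (Suc (Suc n)) \<le> 1 / Suc n" by (simp add: frac_le)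
    then show "A n \<subseteq> A (Suc n)" unfolding A_def by auto
  qed
  have A_un: "(\<Union>n. A n) = SS"
  proof
    show "(\<Union>n. A n) \<subseteq> SS" unfolding A_def SS_def
      by auto (smt (verit) of_nat_0_le_iff divide_nonneg_nonneg)
    show "SS \<subseteq> (\<Union>n. A n)"
    proof
      fix w assume w: "w \<in> SS"
      then have "X w - \<tau> > 0" by (simp add: SS_def)
      then obtain n where "inverse (real (Suc n)) < X w - \<tau>" using reals_Archimedean by blast
      then show "w \<in> (\<Union>n. A n)" using w by (auto simp: A_def SS_def field_simps)
    qed
  qed
  have A_le: "measure M (A n) \<le> 1 - p" for n
  proof -
    have "A n = space M - {w\<in>space M. X w \<le> \<tau> + 1 / Suc n}" by (auto simp: A_def)
    then have "measure M (A n) = 1 - measure M {w\<in>space M. X w \<le> \<tau> + 1 / Suc n}"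
      by (simp add: prob_compl)
    then show ?thesis using tauS[of n] by (simp add: SX_def)
  qed
  have PS: "measure M SS \<le> 1 - p"
    using finite_Lim_measure_incseq[OF A_meas A_inc] A_le A_un
    by (metis LIMSEQ_le_const2)
  have alpha_meas[measurable]: "\<alpha> \<in> borel_measurable M"
    unfolding alpha clip_factor_def by measurable
  have alpha_rng: "0 \<le> \<alpha> w" "\<alpha> w \<le> 1" for w
    using clip_range[OF tau0] by (auto simp: alpha)
  have alpha1: "\<alpha> w = 1" if "w \<notin> SS" "w \<in> space M" for w
    using that by (simp add: alpha SS_def clip_factor_def X_def Gg)
  have alpha_int: "integrable M \<alpha>"
    by (rule integrable_const_bound[where B=1]) (use alpha_rng in auto)
  have ae_int: "integrable M (\<lambda>w. \<alpha> w *\<^sub>R e w)"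
    by (rule Bochner_Integration.integrable_bound[OF e_int]) (use alpha_rng in \<open>auto simp: mult_left_le_one_le\<close>)
  have ag_int: "integrable M (\<lambda>w. \<alpha> w *\<^sub>R g)" using alpha_int by simp
  have ind_int: "integrable M (\<lambda>w. indicator SS w :: real)"
    by (rule integrable_const_bound[where B=1]) auto
  have Y_int: "integrable M Y" unfolding Y_def using e_int by simp
  have indY_int: "integrable M (\<lambda>w. indicator SS w * Y w)"
    by (rule Bochner_Integration.integrable_bound[OF Y_int]) (auto simp: Y_def indicator_def)
  define r where "r = 1 - p"
  define a where "a = 1 - 1/q"
  have rpos: "r > 0" using p by (simp add: r_def)
  have eq1: "(\<integral>w. \<alpha> w *\<^sub>R G w \<partial>M) - (integral\<^sup>L M \<alpha>) *\<^sub>R gradL \<theta> = (\<integral>w. \<alpha> w *\<^sub>R e w - e w \<partial>M)"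
  proof -
    have "(\<integral>w. \<alpha> w *\<^sub>R G w \<partial>M) = (\<integral>w. \<alpha> w *\<^sub>R g + \<alpha> w *\<^sub>R e w \<partial>M)"
      by (simp add: Gg scaleR_add_right)
    also have "\<dots> = (\<integral>w. \<alpha> w *\<^sub>R g \<partial>M) + (\<integral>w. \<alpha> w *\<^sub>R e w \<partial>M)"
      by (rule Bochner_Integration.integral_add[OF ag_int ae_int])
    also have "(\<integral>w. \<alpha> w *\<^sub>R g \<partial>M) = (integral\<^sup>L M \<alpha>) *\<^sub>R g"
      by (rule integral_scaleR_left) (rule alpha_int)
    finally have "(\<integral>w. \<alpha> w *\<^sub>R G w \<partial>M) - (integral\<^sup>L M \<alpha>) *\<^sub>R gradL \<theta> = (\<integral>w. \<alpha> w *\<^sub>R e w \<partial>M) - integral\<^sup>L M e"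
      using e0 by (simp add: g_def)
    also have "\<dots> = (\<integral>w. \<alpha> w *\<^sub>R e w - e w \<partial>M)"
      by (rule Bochner_Integration.integral_diff[OF ae_int e_int, symmetric])
    finally show ?thesis .
  qed
  have claim1: "norm ((\<integral>w. \<alpha> w *\<^sub>R G w \<partial>M) - (integral\<^sup>L M \<alpha>) *\<^sub>R gradL \<theta>) \<le> (1 - p) powr (1 - 1 / q) * C"
  proof -
    have "norm (\<integral>w. \<alpha> w *\<^sub>R e w - e w \<partial>M) \<le> (\<integral>w. norm (\<alpha> w *\<^sub>R e w - e w) \<partial>M)"
      by (rule Bochner_Integration.integral_norm_bound)
    also have "\<dots> \<le> (\<integral>w. indicator SS w * Y w \<partial>M)"
    proof (rule Bochner_Integration.integral_mono)
      show "integrable M (\<lambda>w. norm (\<alpha> w *\<^sub>R e w - e w))" using ae_int e_int by simp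
      show "integrable M (\<lambda>w. indicator SS w * Y w)" by (rule indY_int)
      fix w assume w: "w \<in> space M"
      have "norm (\<alpha> w *\<^sub>R e w - e w) = \<bar>\<alpha> w - 1\<bar> * Y w"
      proof -
        have "\<alpha> w *\<^sub>R e w - e w = (\<alpha> w - 1) *\<^sub>R e w" by (simp add: algebra_simps)
        then show ?thesis by (simp add: Y_def)
      qed
      then show "norm (\<alpha> w *\<^sub>R e w - e w) \<le> indicator SS w * Y w"
        using alpha1[OF _ w] alpha_rng[of w] by (cases "w \<in> SS") (auto simp: Y_def mult_left_le_one_le)
    qed
    also have "\<dots> \<le> (\<integral>w. C * r powr a * (u w / (q * C powr q) + indicator SS w * (a / r)) \<partial>M)"
    proof (rule Bochner_Integration.integral_mono)
      show "integrable M (\<lambda>w. C * r powr a * (u w / (q * C powr q) + indicator SS w * (a / r)))"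
        using u_int ind_int by simp
      show "integrable M (\<lambda>w. indicator SS w * Y w)" by (rule indY_int)
      fix w assume w: "w \<in> space M"
      have Y0: "0 \<le> Y w" by (simp add: Y_def)
      have a0: "0 \<le> a" using q by (simp add: a_def)
      show "indicator SS w * Y w \<le> C * r powr a * (u w / (q * C powr q) + indicator SS w * (a / r))"
      proof (cases "w \<in> SS")
        case True then show ?thesis using young1[OF Y0 Cpos rpos q] by (simp add: u_def a_def)
      next
        case False then show ?thesis using Cpos rpos a0 q u_nonneg[of w] by simp
      qed
    qed
    also have "\<dots> = C * r powr a * (integral\<^sup>L M u / (q * C powr q) + measure M SS * (a / r))"
      using u_int ind_int by simp
    also have "\<dots> \<le> C * r powr a * (C powr q / (q * C powr q) + r * (a / r))"
    proof -
      have "integral\<^sup>L M u / (q * C powr q) \<le> C powr q / (q * C powr q)"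
        using u_le q Cpos by (intro divide_right_mono) auto
      moreover have "measure M SS * (a / r) \<le> r * (a / r)"
        using PS q rpos by (intro mult_right_mono) (auto simp: r_def a_def)
      ultimately show ?thesis using Cpos rpos by (intro mult_left_mono) auto
    qed
    also have "\<dots> = C * r powr a" using Cpos rpos q by (simp add: a_def field_simps)
    finally show ?thesis using eq1 by (simp add: r_def a_def mult.commute)
  qed
  have claim4: "(\<integral>w. (norm (\<alpha> w *\<^sub>R G w - (\<integral>v. \<alpha> v *\<^sub>R G v \<partial>M)))\<^sup>2 \<partial>M) \<le> C\<^sup>2 + 5 * (1 - p) * \<tau>\<^sup>2"
    if q2: "q \<ge> 2"
  proof -
    define V where "V = (\<lambda>w. \<alpha> w *\<^sub>R G w)"
    define m where "m = integral\<^sup>L M V"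
    define c where "c = clip_factor \<tau> g *\<^sub>R g"
    have V_meas[measurable]: "V \<in> borel_measurable M" unfolding V_def by measurable
    have V_bd: "norm (V w) \<le> \<tau>" for w unfolding V_def alpha by (rule clip_norm[OF tau0])
    have V_int: "integrable M V" by (rule integrable_const_bound[where B=\<tau>]) (use V_bd in auto)
    have Vc: "norm (V w - c) \<le> Y w" for w
      using clip_lip[OF tau0, of "G w" g] by (simp add: V_def alpha c_def Gg Y_def)
    have B1_int: "integrable M (\<lambda>w. (norm (V w - m))\<^sup>2)"
    proof (rule integrable_const_bound[where B="(\<tau> + norm m)^2"])
      have "(norm (V w - m))\<^sup>2 \<le> (\<tau> + norm m)^2" for w
      proof (rule power_mono)
        show "norm (V w - m) \<le> \<tau> + norm m"
          using norm_triangle_ineq4[of "V w" m] V_bd[of w] by linarith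
      qed simp
      then show "AE w in M. norm ((norm (V w - m))\<^sup>2) \<le> (\<tau> + norm m)^2" by simp
    qed simp
    have B2_int: "integrable M (\<lambda>w. (norm (V w - c))\<^sup>2)"
    proof (rule integrable_const_bound[where B="(\<tau> + norm c)^2"])
      have "(norm (V w - c))\<^sup>2 \<le> (\<tau> + norm c)^2" for w
      proof (rule power_mono)
        show "norm (V w - c) \<le> \<tau> + norm c"
          using norm_triangle_ineq4[of "V w" c] V_bd[of w] by linarith
      qed simp
      then show "AE w in M. norm ((norm (V w - c))\<^sup>2) \<le> (\<tau> + norm c)^2" by simp
    qed simp
    have I_int: "integrable M (\<lambda>w. (V w - m) \<bullet> (m - c))"
      using V_int by simp
    define R where "R = (\<lambda>w. C^2 * ((2/q) * (u w / C powr q) + (1 - 2/q)))"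
    have R_int: "integrable M R" unfolding R_def using u_int by simp
    have Y2R: "(Y w)^2 \<le> R w" for w
      unfolding R_def u_def using young2[OF _ Cpos q2, of "Y w"] by (simp add: Y_def)
    have Y2_int: "integrable M (\<lambda>w. (Y w)^2)"
    proof (rule Bochner_Integration.integrable_bound[OF R_int])
      show "AE w in M. norm ((Y w)^2) \<le> norm (R w)" using Y2R by (auto intro!: AE_I2 order_trans[OF _ abs_ge_self])
    qed simp
    have "(\<integral>w. (norm (V w - m))\<^sup>2 \<partial>M) \<le> (\<integral>w. (norm (V w - c))\<^sup>2 - 2 * ((V w - m) \<bullet> (m - c)) \<partial>M)"
    proof (rule Bochner_Integration.integral_mono[OF B1_int])
      show "integrable M (\<lambda>w. (norm (V w - c))\<^sup>2 - 2 * ((V w - m) \<bullet> (m - c)))"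
        using B2_int I_int by simp
      fix w
      have "V w - c = (V w - m) + (m - c)" by simp
      then have "(norm (V w - c))\<^sup>2 = (norm (V w - m))\<^sup>2 + 2 * ((V w - m) \<bullet> (m - c)) + (norm (m - c))\<^sup>2"
        by (simp only: norm_add_sq)
      then show "(norm (V w - m))\<^sup>2 \<le> (norm (V w - c))\<^sup>2 - 2 * ((V w - m) \<bullet> (m - c))" by simp
    qed
    also have "\<dots> = (\<integral>w. (norm (V w - c))\<^sup>2 \<partial>M) - 2 * (\<integral>w. (V w - m) \<bullet> (m - c) \<partial>M)"
      using B2_int I_int by simp
    also have "(\<integral>w. (V w - m) \<bullet> (m - c) \<partial>M) = 0"
    proof -
      have "(\<integral>w. (V w - m) \<bullet> (m - c) \<partial>M) = (\<integral>w. V w - m \<partial>M) \<bullet> (m - c)"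
        using V_int by simp
      also have "(\<integral>w. V w - m \<partial>M) = 0" using V_int by (simp add: m_def prob_space)
      finally show ?thesis by simp
    qed
    also have "(\<integral>w. (norm (V w - c))\<^sup>2 \<partial>M) \<le> (\<integral>w. (Y w)^2 \<partial>M)"
      by (rule Bochner_Integration.integral_mono[OF B2_int Y2_int]) (intro power_mono Vc norm_ge_zero)
    also have "\<dots> \<le> integral\<^sup>L M R" by (rule Bochner_Integration.integral_mono[OF Y2_int R_int Y2R])
    also have "integral\<^sup>L M R = C^2 * ((2/q) * (integral\<^sup>L M u / C powr q) + (1 - 2/q))"
      unfolding R_def using u_int by (simp add: prob_space)
    also have "\<dots> \<le> C^2 * ((2/q) * (C powr q / C powr q) + (1 - 2/q))"
      using u_le Cpos q2 by (intro mult_left_mono add_right_mono mult_left_mono divide_right_mono) auto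
    also have "\<dots> = C^2" using Cpos by simp
    finally have "(\<integral>w. (norm (\<alpha> w *\<^sub>R G w - (\<integral>v. \<alpha> v *\<^sub>R G v \<partial>M)))\<^sup>2 \<partial>M) \<le> C\<^sup>2"
      unfolding V_def m_def by simp
    moreover have "0 \<le> 5 * (1 - p) * \<tau>\<^sup>2" using p by simp
    ultimately show ?thesis by linarith
  qed
  show ?thesis using claim1 claim2 claim3 claim4 QY by (simp add: t0_def g_def)
qed

end
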